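(* Suppose the nontrivial move problem has been solved: each agent $a$ holds a direction $\mathrm{dir}_a\in\{\text{right},\text{left}\}$ such that the round in which every agent starts in direction $\mathrm{dir}_a$ is a nontrivial move. Then the leader election problem can be solved in $O(\log N)$ further rounds.
   Context: Model: $n>4$ agents are at distinct, arbitrary initial positions on a circle of circumference $1$ and act in synchronised unit-time rounds. Each agent has its own notion of right (clockwise) and left; these need not be consistent across agents. At the start of a round each agent chooses a direction and moves at unit speed. Agents never pass: colliding moving agents instantly reverse direction. There is no communication. At the end of each round an agent learns the clockwise distance, in its own orientation, from its start-of-round to its end-of-round position. Agents have distinct IDs in $\{1,\dots,N\}$ with $N\ge n$ known. Rotation index: if $n_C$ agents start clockwise and $n_A$ anticlockwise (objective orientation), each agent moves to the initial position of the agent $(n_C-n_A)\bmod n$ places clockwise; this is the rotation index. A nontrivial move is a round whose rotation index is not in $\{0,n/2\}$. Leader election is solved when exactly one agent has status "leader" and all others have status "non-leader". *)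

theory Defs
  imports Complex_Main
begin

text \<open>Agents are indexed 0..n-1 in objective clockwise order; agent i initially sits at
  coordinate p i in [0,1) (clockwise = increasing coordinate mod 1).
  ori i = True iff agent i's notion of right coincides with objective clockwise.
  An algorithm is a pair (move, decide): move N ident d hist = True means the agent
  starts the round moving right (in its own orientation); it depends only on the known bound N,
  the agent's ID, its given direction d (True = right, own orientation) and its own history of
  observations. decide N ident d hist = True means status leader.\<close>

definition cwd :: "real \<Rightarrow> real \<Rightarrow> real" where
  "cwd x y = frac (y - x)"

text \<open>Rotation index of a round in which agent i moves objectively clockwise iff cw i.\<close>
definition rot_index :: "nat \<Rightarrow> (nat \<Rightarrow> bool) \<Rightarrow> nat" where
  "rot_index n cw =
     nat ((int (card {i. i < n \<and> cw i}) - int (card {i. i < n \<and> \<not> cw i})) mod int n)"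

definition nontrivial :: "nat \<Rightarrow> (nat \<Rightarrow> bool) \<Rightarrow> bool" where
  "nontrivial n cw \<longleftrightarrow> rot_index n cw \<noteq> 0 \<and> 2 * rot_index n cw \<noteq> n"

text \<open>State after t rounds: (R, hist). Since every round permutes the set of positions by a
  rotation, after t rounds agent i sits at p ((i + R) mod n); hist i is the list of observations
  (clockwise distances in the agent's own orientation) of agent i, one per round.\<close>
fun run :: "(nat \<Rightarrow> nat \<Rightarrow> bool \<Rightarrow> real list \<Rightarrow> bool) \<Rightarrow> nat \<Rightarrow> nat \<Rightarrow> (nat \<Rightarrow> real)
    \<Rightarrow> (nat \<Rightarrow> bool) \<Rightarrow> (nat \<Rightarrow> nat) \<Rightarrow> (nat \<Rightarrow> bool) \<Rightarrow> nat \<Rightarrow> nat \<times> (nat \<Rightarrow> real list)" where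
  "run move N n p ori ident d 0 = (0, \<lambda>i. [])"
| "run move N n p ori ident d (Suc t) =
    (let (R, h) = run move N n p ori ident d t;
         cw = (\<lambda>i. move N (ident i) (d i) (h i) = ori i);
         r = rot_index n cw;
         obs = (\<lambda>i. let k = (i + R) mod n; k' = (i + R + r) mod n in
                      if ori i then cwd (p k) (p k') else cwd (p k') (p k))
     in ((R + r) mod n, \<lambda>i. h i @ [obs i]))"

definition leader_elected ::
  "(nat \<Rightarrow> nat \<Rightarrow> bool \<Rightarrow> real list \<Rightarrow> bool) \<Rightarrow> (nat \<Rightarrow> nat \<Rightarrow> bool \<Rightarrow> real list \<Rightarrow> bool)
     \<Rightarrow> nat \<Rightarrow> nat \<Rightarrow> (nat \<Rightarrow> real) \<Rightarrow> (nat \<Rightarrow> bool) \<Rightarrow> (nat \<Rightarrow> nat) \<Rightarrow> (nat \<Rightarrow> bool) \<Rightarrow> nat \<Rightarrow> bool" where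
  "leader_elected move decide N n p ori ident d t \<longleftrightarrow>
     card {i. i < n \<and> decide N (ident i) (d i) (snd (run move N n p ori ident d t) i)} = 1"

end

theory Submission imports Defs begin

lemma run_fst_Suc:
  "fst (run move N n p ori ident d (Suc t)) =
    (fst (run move N n p ori ident d t) +
     rot_index n (\<lambda>i. move N (ident i) (d i) (snd (run move N n p ori ident d t) i) = ori i)) mod n"
  by (simp add: Let_def split: prod.split)

lemma run_snd_Suc:
  "snd (run move N n p ori ident d (Suc t)) i =
    snd (run move N n p ori ident d t) i @
    [let R = fst (run move N n p ori ident d t);
         r = rot_index n (\<lambda>i. move N (ident i) (d i) (snd (run move N n p ori ident d t) i) = ori i);
         k = (i + R) mod n; k' = (i + R + r) mod n in
       if ori i then cwd (p k) (p k') else cwd (p k') (p k)]"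
  by (simp add: Let_def split: prod.split)

declare run.simps(2)[simp del]

lemma run_len: "length (snd (run move N n p ori ident d t) i) = t"
  by (induction t) (simp_all add: run_snd_Suc del: run.simps(2))

lemma run_nth: "j < t \<Longrightarrow> t \<le> t' \<Longrightarrow>
   snd (run move N n p ori ident d t') i ! j = snd (run move N n p ori ident d t) i ! j"
proof (induction t')
  case 0 then show ?case by simp
next
  case (Suc t')
  show ?case
  proof (cases "t = Suc t'")
    case True then show ?thesis by simp
  next
    case False
    then have "t \<le> t'" using Suc by simp
    then show ?thesis using Suc by (simp add: run_snd_Suc nth_append run_len del: run.simps(2))
  qed
qed

lemma sum_sg: "(\<Sum>i<(n::nat). if cw i then 1 else -1 :: int) = int (card {i. i < n \<and> cw i}) - int (card {i. i < n \<and> \<not> cw i})"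
proof -
  have "(\<Sum>i<n. if cw i then 1 else -1 :: int) = (\<Sum>i\<in>{..<n} \<inter> {i. cw i}. 1) + (\<Sum>i\<in>{..<n} \<inter> - {i. cw i}. -1)"
    by (rule sum.If_cases) auto
  also have "{..<n} \<inter> {i. cw i} = {i. i < n \<and> cw i}" by auto
  also have "{..<n} \<inter> - {i. cw i} = {i. i < n \<and> \<not> cw i}" by auto
  finally show ?thesis by simp
qed

lemma rot_index_sum: "rot_index n cw = nat ((\<Sum>i<n. if cw i then 1 else -1 :: int) mod int n)"
  unfolding rot_index_def sum_sg ..

lemma frac_pdiff:
  fixes a b :: real
  assumes "0 \<le> a" "a < 1" "0 \<le> b" "b < 1"
  shows "(a - b \<in> \<int>) \<longleftrightarrow> a = b"
proof
  assume "a - b \<in> \<int>"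
  then obtain k where k: "a - b = of_int k" by (auto elim: Ints_cases)
  have "-1 < real_of_int k" "real_of_int k < 1" using assms k by linarith+
  then have "k = 0" by linarith
  then show "a = b" using k by simp
qed simp

lemma mod_add_self_iff: "(0::nat) < n \<Longrightarrow> ((a + b) mod n = a mod n) \<longleftrightarrow> b mod n = 0"
  by (smt (verit, best) add.commute add_left_cancel less_add_eq_less
    linorder_neqE_nat mod_add_right_eq mod_eq_nat2E mod_less
    mod_mult_self1_is_0 mod_self nat_le_linear trans_less_add1)

lemma obs_pair:
  fixes move N n p ori ident d t i
  defines "h \<equiv> \<lambda>t. snd (run move N n p ori ident d t)"
  defines "rr \<equiv> \<lambda>t. rot_index n (\<lambda>i. move N (ident i) (d i) (h t i) = ori i)"
  assumes n: "0 < n" and mono: "strict_mono_on {..<n} p" and rng: "\<forall>i<n. 0 \<le> p i \<and> p i < 1"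
  shows "frac (h (Suc (Suc t)) i ! t + h (Suc (Suc t)) i ! Suc t) = 0 \<longleftrightarrow> (rr t + rr (Suc t)) mod n = 0"
proof -
  define R where "R = fst (run move N n p ori ident d t)"
  define r1 where "r1 = rr t"
  define r2 where "r2 = rr (Suc t)"
  define k0 where "k0 = (i + R) mod n"
  define k1 where "k1 = (i + R + r1) mod n"
  define k2 where "k2 = (i + R + r1 + r2) mod n"
  have R': "fst (run move N n p ori ident d (Suc t)) = (R + r1) mod n"
    unfolding R_def r1_def rr_def h_def by (rule run_fst_Suc)
  have e1: "h (Suc (Suc t)) i ! t = (if ori i then cwd (p k0) (p k1) else cwd (p k1) (p k0))"
  proof -
    have "h (Suc (Suc t)) i ! t = h (Suc t) i ! t" unfolding h_def by (rule run_nth) auto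
    also have "\<dots> = (if ori i then cwd (p k0) (p k1) else cwd (p k1) (p k0))"
      unfolding h_def run_snd_Suc
      by (simp add: run_len k0_def k1_def R_def r1_def rr_def h_def Let_def nth_append del: run.simps(2))
    finally show ?thesis .
  qed
  have m1: "(i + (R + r1) mod n) mod n = k1" unfolding k1_def by (simp add: mod_add_right_eq add.assoc)
  have m2: "(i + (R + r1) mod n + r2) mod n = k2" unfolding k2_def
    by (metis add.assoc mod_add_left_eq mod_add_right_eq)
  have e2: "h (Suc (Suc t)) i ! Suc t = (if ori i then cwd (p k1) (p k2) else cwd (p k2) (p k1))"
    unfolding h_def run_snd_Suc[of _ _ _ _ _ _ _ "Suc t"]
    using m1 m2
    by (simp add: run_len R' r2_def rr_def h_def Let_def nth_append del: run.simps(2))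
  have k: "k0 < n" "k1 < n" "k2 < n" using n by (auto simp: k0_def k1_def k2_def)
  have inj: "inj_on p {..<n}" using mono by (rule strict_mono_on_imp_inj_on)
  have "frac (h (Suc (Suc t)) i ! t + h (Suc (Suc t)) i ! Suc t) = 0 \<longleftrightarrow> p k2 = p k0"
  proof (cases "ori i")
    case True
    have "frac (h (Suc (Suc t)) i ! t + h (Suc (Suc t)) i ! Suc t) = frac (p k2 - p k0)"
      using True by (simp add: e1 e2 cwd_def)
    then show ?thesis using frac_pdiff[of "p k2" "p k0"] rng k by simp
  next
    case False
    have "frac (h (Suc (Suc t)) i ! t + h (Suc (Suc t)) i ! Suc t) = frac (p k0 - p k2)"
      using False by (simp add: e1 e2 cwd_def)
    then show ?thesis using frac_pdiff[of "p k0" "p k2"] rng k by auto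
  qed
  also have "\<dots> \<longleftrightarrow> k2 = k0" using inj k by (auto dest: inj_onD)
  also have "\<dots> \<longleftrightarrow> (r1 + r2) mod n = 0" unfolding k0_def k2_def
    using mod_add_self_iff[OF n, of "i + R" "r1 + r2"] by (simp add: add.assoc)
  finally show ?thesis unfolding r1_def r2_def .
qed

lemma nat_mod_sum_dvd: "(0::nat) < n \<Longrightarrow> (nat (X mod int n) + nat (Y mod int n)) mod n = 0 \<longleftrightarrow> int n dvd X + Y"
  by (smt (verit, ccfv_SIG) dvd_eq_mod_eq_0 int_eq_iff int_plus mod_add_eq
    nat_zero_as_int of_nat_0_less_iff of_nat_mod pos_mod_sign)

definition tst :: "real list \<Rightarrow> nat \<Rightarrow> bool" where
  "tst h j = (frac (h ! (2*j) + h ! (2*j+1)) \<noteq> 0)"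

definition inK :: "nat \<Rightarrow> real list \<Rightarrow> nat \<Rightarrow> bool" where
  "inK x h b = (\<forall>j<b. odd (x div 2^j) = tst h j)"

definition mv :: "nat \<Rightarrow> nat \<Rightarrow> bool \<Rightarrow> real list \<Rightarrow> bool" where
  "mv N x dd h = (if even (length h) then
      (if inK x h (length h div 2) \<and> odd (x div 2^(length h div 2)) then \<not> dd else dd) else \<not> dd)"

lemma tst_prefix: "2*j+1 < t \<Longrightarrow> t \<le> t' \<Longrightarrow>
  tst (snd (run move N n p ori ident d t') i) j = tst (snd (run move N n p ori ident d t) i) j"
  unfolding tst_def using run_nth[of "2*j" t t'] run_nth[of "2*j+1" t t'] by simp

lemma inK_prefix: "2*b \<le> t \<Longrightarrow> t \<le> t' \<Longrightarrow>
  inK x (snd (run move N n p ori ident d t') i) b = inK x (snd (run move N n p ori ident d t) i) b"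
  unfolding inK_def using tst_prefix[of _ t t'] by auto

lemma invariant:
  fixes N n p ori ident d
  defines "h \<equiv> \<lambda>t. snd (run mv N n p ori ident d t)"
  defines "s \<equiv> \<lambda>i. if d i = ori i then 1 else (-1::int)"
  defines "Mem \<equiv> \<lambda>b i. inK (ident i) (h (2*b) i) b"
  assumes n: "0 < n" and mono: "strict_mono_on {..<n} p" and rng: "\<forall>i<n. 0 \<le> p i \<and> p i < 1"
    and base: "\<not> int n dvd 2 * (\<Sum>i<n. s i)"
  shows "\<not> int n dvd 2 * (\<Sum>i\<in>{i. i < n \<and> Mem b i}. s i) \<and>
         (\<forall>i<n. \<forall>i'<n. \<forall>j<b. tst (h (2*b) i) j = tst (h (2*b) i') j)"
proof (induction b)
  case 0
  have "{i. i < n \<and> Mem 0 i} = {..<n}" by (auto simp: Mem_def inK_def)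
  then show ?case using base by simp
next
  case (Suc b)
  define t where "t = 2*b"
  define F where "F = (\<lambda>i. Mem b i \<and> odd (ident i div 2^b))"
  define aF where "aF = (\<Sum>i\<in>{i. i < n \<and> F i}. s i)"
  define G where "G = (\<not> int n dvd 2 * aF)"
  define rr where "rr = (\<lambda>t. rot_index n (\<lambda>i. mv N (ident i) (d i) (h t i) = ori i))"
  have lenA: "length (h t i) = 2*b" for i by (simp add: h_def t_def run_len)
  have lenB: "length (h (Suc t) i) = 2*b+1" for i unfolding h_def by (simp only: run_len t_def)
  have sgA: "(if mv N (ident i) (d i) (h t i) = ori i then 1 else -1::int) = (if F i then - s i else s i)" for i
    using lenA by (simp add: mv_def F_def Mem_def t_def s_def)
  have sgB: "(if mv N (ident i) (d i) (h (Suc t) i) = ori i then 1 else -1::int) = - s i" for i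
    using lenB by (simp add: mv_def s_def)
  have sumAB: "(\<Sum>i<n. if F i then - s i else s i) + (\<Sum>i<n. - s i) = - (2 * aF)"
  proof -
    have "(\<Sum>i<n. if F i then - s i else s i) + (\<Sum>i<n. - s i) = (\<Sum>i<n. if F i then - 2 * s i else 0)"
      by (simp add: sum.distrib[symmetric]) (rule sum.cong, auto)
    also have "\<dots> = (\<Sum>i\<in>{i. i < n \<and> F i}. - 2 * s i)"
      by (simp add: sum.If_cases lessThan_def Collect_conj_eq Int_commute)
    also have "\<dots> = - (2 * aF)" by (simp add: aF_def sum_distrib_left sum_negf)
    finally show ?thesis .
  qed
  have tstG: "tst (h (2 * Suc b) i) b = G" for i
  proof -
    have "2 * Suc b = Suc (Suc t)" by (simp add: t_def)
    then have "tst (h (2 * Suc b) i) b \<longleftrightarrow> \<not> (rr t + rr (Suc t)) mod n = 0"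
      using obs_pair[OF n mono rng, of mv N ori ident d t i]
      by (simp add: tst_def h_def rr_def t_def)
    also have "\<dots> \<longleftrightarrow> \<not> int n dvd (\<Sum>i<n. if F i then - s i else s i) + (\<Sum>i<n. - s i)"
      unfolding rr_def rot_index_sum sgA sgB using nat_mod_sum_dvd[OF n] by simp
    also have "\<dots> \<longleftrightarrow> G" unfolding sumAB G_def by simp
    finally show ?thesis .
  qed
  have Mem_Suc: "Mem (Suc b) i = (Mem b i \<and> odd (ident i div 2^b) = G)" for i
  proof -
    have "inK (ident i) (h (2 * Suc b) i) b = Mem b i"
      unfolding Mem_def h_def by (rule inK_prefix) auto
    then show ?thesis unfolding Mem_def using tstG[of i]
      by (auto simp: inK_def less_Suc_eq)
  qed
  have agree: "\<forall>i<n. \<forall>i'<n. \<forall>j<Suc b. tst (h (2*Suc b) i) j = tst (h (2*Suc b) i') j"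
  proof (intro allI impI)
    fix i i' j assume "i < n" "i' < n" "j < Suc b"
    show "tst (h (2*Suc b) i) j = tst (h (2*Suc b) i') j"
    proof (cases "j = b")
      case True then show ?thesis using tstG by simp
    next
      case False
      then have "j < b" using \<open>j < Suc b\<close> by simp
      have "tst (h (2*Suc b) i) j = tst (h (2*b) i) j" "tst (h (2*Suc b) i') j = tst (h (2*b) i') j"
        unfolding h_def using \<open>j < b\<close> by (intro tst_prefix; simp)+
      then show ?thesis using Suc.IH \<open>i < n\<close> \<open>i' < n\<close> \<open>j < b\<close> by metis
    qed
  qed
  have nd: "\<not> int n dvd 2 * (\<Sum>i\<in>{i. i < n \<and> Mem (Suc b) i}. s i)"
  proof (cases G)
    case True
    have "{i. i < n \<and> Mem (Suc b) i} = {i. i < n \<and> F i}" using True by (auto simp: Mem_Suc F_def)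
    then show ?thesis using True by (simp add: G_def aF_def)
  next
    case False
    have eq: "{i. i < n \<and> Mem (Suc b) i} = {i. i < n \<and> Mem b i} - {i. i < n \<and> F i}"
      using False by (auto simp: Mem_Suc F_def)
    have "(\<Sum>i\<in>{i. i < n \<and> Mem (Suc b) i}. s i) = (\<Sum>i\<in>{i. i < n \<and> Mem b i}. s i) - aF"
      unfolding eq aF_def by (rule sum_diff) (auto simp: F_def)
    then have e2: "2 * (\<Sum>i\<in>{i. i < n \<and> Mem b i}. s i) = 2 * (\<Sum>i\<in>{i. i < n \<and> Mem (Suc b) i}. s i) + 2 * aF"
      by simp
    show ?thesis
    proof
      assume "int n dvd 2 * (\<Sum>i\<in>{i. i < n \<and> Mem (Suc b) i}. s i)"
      moreover have "int n dvd 2 * aF" using False unfolding G_def by simp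
      ultimately have "int n dvd 2 * (\<Sum>i\<in>{i. i < n \<and> Mem b i}. s i)" unfolding e2 by (rule dvd_add)
      then show False using Suc.IH by blast
    qed
  qed
  show ?case using nd agree by blast
qed

definition LL :: "nat \<Rightarrow> nat" where "LL N = (LEAST k. N < 2^k)"

definition dec :: "nat \<Rightarrow> nat \<Rightarrow> bool \<Rightarrow> real list \<Rightarrow> bool" where
  "dec N x dd h = inK x h (LL N)"

lemma LL_gt: "N < 2 ^ LL N"
  unfolding LL_def by (rule LeastI[of _ N]) (rule less_exp)

lemma LL_le: "1 \<le> N \<Longrightarrow> 2 ^ (LL N - 1) \<le> N"
proof -
  assume N: "1 \<le> N"
  have "LL N \<noteq> 0" using N LL_gt[of N] by (metis LL_def LeastI_ex less_exp not_less power_0) 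
  then have "LL N - 1 < LL N" by simp
  then have "\<not> N < 2 ^ (LL N - 1)" unfolding LL_def using not_less_Least by blast
  then show ?thesis by simp
qed

lemma bits_eq: "x < 2^b \<Longrightarrow> y < 2^b \<Longrightarrow> (\<forall>j<b. odd (x div 2^j) = odd ((y::nat) div 2^j)) \<Longrightarrow> x = y"
proof (induction b arbitrary: x y)
  case 0 then show ?case by simp
next
  case (Suc b)
  have "x div 2 = y div 2"
  proof (rule Suc.IH)
    show "x div 2 < 2^b" "y div 2 < 2^b" using Suc.prems by auto
    show "\<forall>j<b. odd (x div 2 div 2 ^ j) = odd (y div 2 div 2 ^ j)"
      using Suc.prems(3) by (auto simp: div_mult2_eq[symmetric] mult.commute)
  qed
  moreover have "odd x = odd y" using Suc.prems(3)[rule_format, of 0] by simp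
  ultimately show ?case by (metis div_mult_mod_eq odd_iff_mod_2_eq_one even_iff_mod_2_eq_zero)
qed

lemma bound: "2 \<le> N \<Longrightarrow> real (2 * LL N) \<le> (4 / ln 2) * ln (real N)"
proof -
  assume N: "2 \<le> N"
  have "2 ^ (LL N - 1) \<le> N" using N by (intro LL_le) simp
  then have "real (2 ^ (LL N - 1)) \<le> real N" by linarith
  then have "log 2 (2 ^ (LL N - 1)) \<le> log 2 (real N)"
    using N by (subst log_le_cancel_iff) auto
  then have a: "real (LL N - 1) \<le> log 2 (real N)" by (simp add: log_nat_power)
  have "log 2 2 \<le> log 2 (real N)" using N by (subst log_le_cancel_iff) auto
  then have b: "1 \<le> log 2 (real N)" by simp
  have "real (LL N) \<le> real (LL N - 1) + 1" by simp
  then have "real (2 * LL N) \<le> 4 * log 2 (real N)" using a b by simp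
  also have "\<dots> = (4 / ln 2) * ln (real N)" by (simp add: log_def)
  finally show ?thesis .
qed

lemma nontriv_base:
  assumes n: "0 < n" and nt: "nontrivial n (\<lambda>i. d i = ori i)"
  shows "\<not> int n dvd 2 * (\<Sum>i<n. if d i = ori i then 1 else (-1::int))"
proof
  define D where "D = (\<Sum>i<n. if d i = ori i then 1 else (-1::int))"
  assume "int n dvd 2 * (\<Sum>i<n. if d i = ori i then 1 else (-1::int))"
  then have dv: "int n dvd 2 * D" by (simp add: D_def)
  define m where "m = D mod int n"
  have m: "0 \<le> m" "m < int n" using n by (auto simp: m_def)
  have "rot_index n (\<lambda>i. d i = ori i) = nat m" by (simp add: rot_index_sum D_def m_def)
  then have m1: "m \<noteq> 0" "2 * m \<noteq> int n" using nt m unfolding nontrivial_def by auto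
  have "int n dvd 2 * m" using dv unfolding m_def
    by (metis dvd_eq_mod_eq_0 mod_mult_right_eq)
  then obtain q where q: "2 * m = int n * q" by (auto elim: dvdE)
  have np: "0 < int n" using n by simp
  have "int n * 0 \<le> int n * q" using q m by simp
  then have "0 \<le> q" using np by (simp add: zero_le_mult_iff)
  moreover have "int n * q < int n * 2" using q m by linarith
  then have "q < 2" using np by (simp add: mult_less_cancel_left_pos)
  ultimately have "q = 0 \<or> q = 1" by auto
  then show False using q m1 by auto
qed

theorem lemma7:
  shows "\<exists>(C::real) move decide (T :: nat \<Rightarrow> nat).
    (\<forall>N\<ge>2. real (T N) \<le> C * ln (real N)) \<and>
    (\<forall>N n p ori ident d.
       4 < n \<longrightarrow> n \<le> N \<longrightarrow>
       strict_mono_on {..<n} p \<longrightarrow> (\<forall>i<n. 0 \<le> p i \<and> p i < 1) \<longrightarrow>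
       inj_on ident {..<n} \<longrightarrow> (\<forall>i<n. ident i \<in> {1..N}) \<longrightarrow>
       nontrivial n (\<lambda>i. d i = ori i) \<longrightarrow>
       leader_elected move decide N n p ori ident d (T N))"
proof (intro exI conjI allI impI)
  show "\<And>N. 2 \<le> N \<Longrightarrow> real (2 * LL N) \<le> (4 / ln 2) * ln (real N)" by (rule bound)
next
  fix N n :: nat and p :: "nat \<Rightarrow> real" and ori d :: "nat \<Rightarrow> bool" and ident :: "nat \<Rightarrow> nat"
  assume n4: "4 < n" and nN: "n \<le> N" and mono: "strict_mono_on {..<n} (p::nat \<Rightarrow> real)"
    and rng: "\<forall>i<n. 0 \<le> p i \<and> p i < 1" and inj: "inj_on ident {..<n}"
    and idr: "\<forall>i<n. ident i \<in> {1..N}" and nt: "nontrivial n (\<lambda>i. d i = ori i)"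
  have n: "0 < n" using n4 by simp
  define h where "h = (\<lambda>t. snd (run mv N n p ori ident d t))"
  define s where "s = (\<lambda>i. if d i = ori i then 1 else (-1::int))"
  define Mem where "Mem = (\<lambda>b i. inK (ident i) (h (2*b) i) b)"
  have base: "\<not> int n dvd 2 * (\<Sum>i<n. s i)" using nontriv_base[OF n nt] by (simp add: s_def)
  have inv: "\<not> int n dvd 2 * (\<Sum>i\<in>{i. i < n \<and> Mem (LL N) i}. s i) \<and>
         (\<forall>i<n. \<forall>i'<n. \<forall>j<LL N. tst (h (2*LL N) i) j = tst (h (2*LL N) i') j)"
    using invariant[OF n mono rng, where N=N and ident=ident and ori=ori and d=d and b="LL N"] base
    unfolding h_def s_def Mem_def by blast
  define S where "S = {i. i < n \<and> Mem (LL N) i}"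
  have "S \<noteq> {}"
  proof
    assume "S = {}"
    have "\<not> int n dvd 2 * (\<Sum>i\<in>S. s i)" using inv unfolding S_def by blast
    then show False using \<open>S = {}\<close> by simp
  qed
  then obtain i0 where i0: "i0 \<in> S" by blast
  have uniq: "i = i0" if "i \<in> S" for i
  proof -
    have ii: "i < n" "i0 < n" "Mem (LL N) i" "Mem (LL N) i0" using that i0 by (auto simp: S_def)
    have "\<forall>j<LL N. odd (ident i div 2^j) = odd (ident i0 div 2^j)"
    proof (intro allI impI)
      fix j assume j: "j < LL N"
      have "odd (ident i div 2^j) = tst (h (2*LL N) i) j" using ii(3) j by (simp add: Mem_def inK_def)
      also have "\<dots> = tst (h (2*LL N) i0) j" using inv ii j by blast
      also have "\<dots> = odd (ident i0 div 2^j)" using ii(4) j by (simp add: Mem_def inK_def)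
      finally show "odd (ident i div 2^j) = odd (ident i0 div 2^j)" .
    qed
    moreover have "ident i < 2 ^ LL N" "ident i0 < 2 ^ LL N"
      using idr ii LL_gt[of N] by (auto intro: le_less_trans)
    ultimately have "ident i = ident i0" using bits_eq by blast
    then show ?thesis using inj ii by (auto dest: inj_onD)
  qed
  have "S = {i0}" using i0 uniq by blast
  moreover have "{i. i < n \<and> dec N (ident i) (d i) (snd (run mv N n p ori ident d (2 * LL N)) i)} = S"
    by (simp add: S_def Mem_def dec_def h_def)
  ultimately show "leader_elected mv dec N n p ori ident d (2 * LL N)"
    unfolding leader_elected_def by simp
qed

end
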